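(* Let $(E,\rho)$ be a Polish metric space and $\Psi=\{\Psi(t)\}_{t\geq0}$ an $E$-valued time-homogeneous Markov process with transition semigroup $\{P(t)\}_{t\geq 0}$ and initial distribution $\mu$. Let $V:E\to[0,\infty)$ be continuous and assume: (a) $P(t)(C_b(E))\subset C_b(E)$ for all $t\geq0$; (b) $\{P(t)\}$ has a unique invariant probability measure $\mu_*$, and there are $\gamma>0$ and $C:\{\nu\in\mathcal{M}_1(E):\int V\,d\nu<\infty\}\to[0,\infty)$ with $d_{\mathrm{FM}}(\nu P(t),\mu_* )\leq C(\nu)e^{-\gamma t}$ for all $t\geq0$ and such $\nu$, where $C(\delta_x)=\varkappa(V(x)+1)^{1/2}$ for some $\varkappa>0$; (c) there exist $A,B\geq 0$, $\Gamma>0$ with $P(t)V^2(x)\leq Ae^{-\Gamma t}V^2(x)+B$ for all $x,t$; (d) $\int_E V^2\,d\mu<\infty$. Fix $g\in\operatorname{Lip}_b(E)$, let $\bar g=g-\int g\,d\mu_*$, $\chi(x)=\int_0^\infty P(t)\bar g(x)\,dt$, and $Z(n)=\chi(\Psi(n))-\chi(\Psi(n-1))+\int_{n-1}^n\bar g(\Psi(s))\,ds$ for $n\in\mathbb{N}$. Then for every $p\in(0,4]$ there exist constants $\tilde A_p,\tilde B_p\geq0$ and $\Gamma_p>0$ such that $$\int_E\mathbb{E}_x(|Z(i)|^p)\,(\mu P(t))(dx)\leq\tilde A_pe^{-\Gamma_p(i+t)}+\tilde B_p\quad\text{for all }i\in\mathbb{N},\ t\geq0,$$ and moreover $\sup_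{i\in\mathbb{N}}\mathbb{E}_{\mu_*}(|Z(i)|^p)<\infty$.
   Context: $\mathcal{M}_1(E)$: Borel probability measures; $\operatorname{Lip}_b(E)$: bounded Lipschitz functions with $\|f\|_{\mathrm{BL}}=\max\{\|f\|_\infty,\sup_{x\neq y}|f(x)-f(y)|/\rho(x,y)\}$; $d_{\mathrm{FM}}(\mu,\nu)=\sup\{|\int f\,d\mu-\int f\,d\nu|:\|f\|_{\mathrm{BL}}\leq1\}$. $P(t)f(x)=\int f(y)P(t)(x,dy)$, $\nu P(t)=\int P(t)(x,\cdot)\nu(dx)$. $\mathbb{E}_x$ and $\mathbb{E}_{\mu_*}$ denote expectation for the process started at $\delta_x$, respectively with initial distribution $\mu_*$. *)

theory Defs
  imports "HOL-Probability.Probability"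
begin

definition Pf :: "(real \<Rightarrow> 'a \<Rightarrow> 'a measure) \<Rightarrow> real \<Rightarrow> ('a \<Rightarrow> real) \<Rightarrow> 'a \<Rightarrow> real" where
  "Pf P t f x = (\<integral>y. f y \<partial>(P t x))"

definition BL_le1 :: "('a::metric_space \<Rightarrow> real) \<Rightarrow> bool" where
  "BL_le1 f \<longleftrightarrow> (\<forall>x. \<bar>f x\<bar> \<le> 1) \<and> (\<forall>x y. \<bar>f x - f y\<bar> \<le> dist x y)"

definition d_FM :: "'a::metric_space measure \<Rightarrow> 'a measure \<Rightarrow> real" where
  "d_FM \<mu> \<nu> = Sup {\<bar>(\<integral>x. f x \<partial>\<mu>) - (\<integral>x. f x \<partial>\<nu>)\<bar> | f. BL_le1 f \<and> f \<in> borel_measurable borel}"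

definition prob_borel :: "'a::topological_space measure \<Rightarrow> bool" where
  "prob_borel \<nu> \<longleftrightarrow> prob_space \<nu> \<and> sets \<nu> = sets borel"

definition invariant :: "(real \<Rightarrow> 'a::topological_space \<Rightarrow> 'a measure) \<Rightarrow> 'a measure \<Rightarrow> bool" where
  "invariant P \<nu> \<longleftrightarrow> prob_borel \<nu> \<and> (\<forall>t\<ge>0. (\<nu> \<bind> P t) = \<nu>)"

definition nat_filtration :: "'w measure \<Rightarrow> (real \<Rightarrow> 'w \<Rightarrow> 'a::topological_space) \<Rightarrow> real \<Rightarrow> 'w measure" where
  "nat_filtration S X s = sigma (space S) (\<Union>r\<in>{0..s}. {X r -` A \<inter> space S | A. A \<in> sets borel})"

definition markov_family ::
  "'w measure \<Rightarrow> ('a::topological_space \<Rightarrow> 'w measure) \<Rightarrow> (real \<Rightarrow> 'w \<Rightarrow> 'a) \<Rightarrow> (real \<Rightarrow> 'a \<Rightarrow> 'a measure) \<Rightarrow> bool" where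
  "markov_family S Mx X P \<longleftrightarrow>
     (\<forall>t\<ge>0. P t \<in> borel \<rightarrow>\<^sub>M prob_algebra borel) \<and>
     Mx \<in> borel \<rightarrow>\<^sub>M prob_algebra S \<and>
     (\<lambda>(t, \<omega>). X t \<omega>) \<in> (restrict_space borel {0..} \<Otimes>\<^sub>M S) \<rightarrow>\<^sub>M borel \<and>
     (\<forall>x. AE \<omega> in Mx x. X 0 \<omega> = x) \<and>
     (\<forall>x s t f A. s \<ge> 0 \<longrightarrow> t \<ge> 0 \<longrightarrow> f \<in> borel_measurable borel \<longrightarrow> bounded (range f) \<longrightarrow>
        A \<in> sets (nat_filtration S X s) \<longrightarrow>
        (\<integral>\<omega>. indicator A \<omega> * f (X (s + t) \<omega>) \<partial>Mx x) =
        (\<integral>\<omega>. indicator A \<omega> * Pf P t f (X s \<omega>) \<partial>Mx x))"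

definition centred :: "'a measure \<Rightarrow> ('a \<Rightarrow> real) \<Rightarrow> 'a \<Rightarrow> real" where
  "centred \<mu>s g x = g x - (\<integral>y. g y \<partial>\<mu>s)"

definition chi :: "(real \<Rightarrow> 'a \<Rightarrow> 'a measure) \<Rightarrow> 'a measure \<Rightarrow> ('a \<Rightarrow> real) \<Rightarrow> 'a \<Rightarrow> real" where
  "chi P \<mu>s g x = (LINT t:{0..}|lborel. Pf P t (centred \<mu>s g) x)"

definition Zinc :: "(real \<Rightarrow> 'a \<Rightarrow> 'a measure) \<Rightarrow> 'a measure \<Rightarrow> ('a \<Rightarrow> real) \<Rightarrow> (real \<Rightarrow> 'w \<Rightarrow> 'a)
    \<Rightarrow> nat \<Rightarrow> 'w \<Rightarrow> real" where
  "Zinc P \<mu>s g X n \<omega> = chi P \<mu>s g (X (real n) \<omega>) - chi P \<mu>s g (X (real n - 1) \<omega>)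
      + (LINT s:{real n - 1..real n}|lborel. centred \<mu>s g (X s \<omega>))"

end

theory Submission
  imports Defs "HOL-Library.Sum_of_Squares"
begin

lemma int_bound:
  fixes f :: "'x \<Rightarrow> real"
  assumes "(\<integral>\<^sup>+x. ennreal (norm (f x)) \<partial>M) \<le> ennreal c" "0 \<le> c"
  shows "norm (integral\<^sup>L M f) \<le> c"
proof (cases "integrable M f")
  case True
  then have "ennreal (norm (integral\<^sup>L M f)) \<le> ennreal c"
    using integral_norm_bound_ennreal[OF True] assms(1) by (meson order_trans)
  then show ?thesis using assms(2) by (simp add: ennreal_le_iff)
next
  case False
  then show ?thesis using assms(2) by (simp add: not_integrable_integral_eq)
qed

lemma trunc_bound:
  fixes h :: "'x \<Rightarrow> real"
  assumes hm: "h \<in> borel_measurable M" and hpos: "\<And>x. h x \<ge> 0"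
    and b: "\<And>N::nat. (\<integral>\<^sup>+x. ennreal (min (h x) (real N)) \<partial>M) \<le> c"
  shows "(\<integral>\<^sup>+x. ennreal (h x) \<partial>M) \<le> c"
proof -
  have eq: "ennreal (h x) = (SUP N. ennreal (min (h x) (real N)))" for x
  proof (rule antisym)
    obtain N :: nat where "h x \<le> real N" using real_arch_simple by blast
    then have "ennreal (h x) = ennreal (min (h x) (real N))" by simp
    then show "ennreal (h x) \<le> (SUP N. ennreal (min (h x) (real N)))"
      by (metis SUP_upper UNIV_I)
    show "(SUP N. ennreal (min (h x) (real N))) \<le> ennreal (h x)"
      by (intro SUP_least ennreal_leI) simp
  qed
  have "(\<integral>\<^sup>+x. ennreal (h x) \<partial>M) = (\<integral>\<^sup>+x. (SUP N. ennreal (min (h x) (real N))) \<partial>M)"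
    using eq by simp
  also have "\<dots> = (SUP N. \<integral>\<^sup>+x. ennreal (min (h x) (real N)) \<partial>M)"
  proof (rule nn_integral_monotone_convergence_SUP)
    show "incseq (\<lambda>N x. ennreal (min (h x) (real N)))"
      by (intro monoI le_funI ennreal_leI) (auto simp: min_def)
    show "\<And>i. (\<lambda>x. ennreal (min (h x) (real i))) \<in> borel_measurable M" using hm by measurable
  qed
  also have "\<dots> \<le> c" using b by (intro SUP_least) auto
  finally show ?thesis .
qed

lemma powr_bound:
  fixes z D u v p :: real
  assumes "0 \<le> z" "z \<le> D * (sqrt (u+1) + sqrt (v+1))" "0 \<le> u" "0 \<le> v" "0 < p" "p \<le> 4" "0 \<le> D"
  shows "z powr p \<le> 1 + 16 * D^4 * (u^2 + v^2 + 2)"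
proof -
  have a: "z powr p \<le> 1 + z^4"
  proof (cases "z \<le> 1")
    case True
    then have "z powr p \<le> 1" using assms by (intro powr_le1) auto
    then show ?thesis by (smt (verit) zero_le_power assms(1))
  next
    case False
    then have "z powr p \<le> z powr 4" using assms by (intro powr_mono) auto
    also have "\<dots> = z^4" using False by (simp add: powr_realpow)
    finally show ?thesis by simp
  qed
  define a where "a = sqrt (u+1)"
  define b where "b = sqrt (v+1)"
  have a2: "a^2 = u+1" unfolding a_def using assms by simp
  have b2: "b^2 = v+1" unfolding b_def using assms by simp
  have a4: "a^4 = (u+1)^2" using a2 by (metis power_mult num_double numeral_times_numeral mult.commute)
  have b4: "b^4 = (v+1)^2" using b2 by (metis power_mult num_double numeral_times_numeral mult.commute)
  have ab: "0 \<le> a" "0 \<le> b" unfolding a_def b_def using assms by auto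
  have "z^4 \<le> (D*(a+b))^4" using assms unfolding a_def b_def by (intro power_mono) (auto simp: assms(3,4) add_nonneg_nonneg)
  also have "\<dots> = D^4 * (a+b)^4" by (simp add: power_mult_distrib)
  also have "\<dots> \<le> D^4 * (8*(a^4+b^4))"
  proof (intro mult_left_mono)
    have "(a+b)^4 \<le> 8*(a^4+b^4)" using ab
      by (sos)
    then show "(a+b)^4 \<le> 8*(a^4+b^4)" .
  qed (simp add: assms)
  also have "\<dots> \<le> 16 * D^4 * (u^2 + v^2 + 2)"
  proof -
    have e1: "2*(u^2+1) - (u+1)^2 = (u-1)^2" "2*(v^2+1) - (v+1)^2 = (v-1)^2"
      by (simp_all add: power2_eq_square algebra_simps)
    have "(u+1)^2 \<le> 2*(u^2+1)" "(v+1)^2 \<le> 2*(v^2+1)"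
      using e1 zero_le_power2[of "u-1"] zero_le_power2[of "v-1"] by linarith+
    then have "8*(a^4+b^4) \<le> 16*(u^2+v^2+2)" unfolding a4 b4 by (smt (verit))
    then have "D^4*(8*(a^4+b^4)) \<le> D^4*(16*(u^2+v^2+2))"
      by (rule mult_left_mono) (simp add: assms)
    then show ?thesis by (simp add: algebra_simps)
  qed
  finally show ?thesis using a by simp
qed

lemma markov_parts:
  assumes "markov_family S Mx X P"
  shows "\<And>t. t \<ge> 0 \<Longrightarrow> P t \<in> borel \<rightarrow>\<^sub>M prob_algebra borel"
    and "Mx \<in> borel \<rightarrow>\<^sub>M prob_algebra S"
    and "\<And>t. t \<ge> 0 \<Longrightarrow> X t \<in> borel_measurable S"
    and "\<And>x. AE \<omega> in Mx x. X 0 \<omega> = x"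
    and "\<And>x s t f A. s \<ge> 0 \<Longrightarrow> t \<ge> 0 \<Longrightarrow> f \<in> borel_measurable borel \<Longrightarrow> bounded (range f) \<Longrightarrow>
        A \<in> sets (nat_filtration S X s) \<Longrightarrow>
        (\<integral>\<omega>. indicator A \<omega> * f (X (s + t) \<omega>) \<partial>Mx x) =
        (\<integral>\<omega>. indicator A \<omega> * Pf P t f (X s \<omega>) \<partial>Mx x)"
proof -
  note m = assms[unfolded markov_family_def]
  show "\<And>t. t \<ge> 0 \<Longrightarrow> P t \<in> borel \<rightarrow>\<^sub>M prob_algebra borel" using m by blast
  show "Mx \<in> borel \<rightarrow>\<^sub>M prob_algebra S" using m by blast
  show "\<And>x. AE \<omega> in Mx x. X 0 \<omega> = x" using m by blast
  show "\<And>x s t f A. s \<ge> 0 \<Longrightarrow> t \<ge> 0 \<Longrightarrow> f \<in> borel_measurable borel \<Longrightarrow> bounded (range f) \<Longrightarrow>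
        A \<in> sets (nat_filtration S X s) \<Longrightarrow>
        (\<integral>\<omega>. indicator A \<omega> * f (X (s + t) \<omega>) \<partial>Mx x) =
        (\<integral>\<omega>. indicator A \<omega> * Pf P t f (X s \<omega>) \<partial>Mx x)" using m by blast
  fix t :: real assume t: "t \<ge> 0"
  have j: "(\<lambda>(t, \<omega>). X t \<omega>) \<in> (restrict_space borel {0..} \<Otimes>\<^sub>M S) \<rightarrow>\<^sub>M borel" using m by blast
  have "t \<in> space (restrict_space borel {0..})" using t by (simp add: space_restrict_space)
  from measurable_compose[OF measurable_Pair1'[OF this] j]
  show "X t \<in> borel_measurable S" by simp
qed

lemma pfin: "prob_space M \<Longrightarrow> finite_measure M"
  by (simp add: prob_space_def)

lemma prob_kernel:
  assumes "K \<in> M \<rightarrow>\<^sub>M prob_algebra N" "x \<in> space M"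
  shows "prob_space (K x)" "sets (K x) = sets N"
  using measurable_space[OF assms] by (auto simp: space_prob_algebra)

lemma E_bound:
  fixes V :: "'a::topological_space \<Rightarrow> real"
  assumes markov: "markov_family S Mx X P" and V_cont: "continuous_on UNIV V"
    and lyap: "\<And>x t. t \<ge> 0 \<Longrightarrow>
        (\<integral>\<^sup>+ y. ennreal ((V y)\<^sup>2) \<partial>(P t x)) \<le> ennreal (A * exp (- \<Gamma> * t) * (V x)\<^sup>2 + B)"
    and t: "t \<ge> 0"
  shows "(\<integral>\<^sup>+ \<omega>. ennreal ((V (X t \<omega>))\<^sup>2) \<partial>Mx x) \<le> ennreal (A * exp (- \<Gamma> * t) * (V x)\<^sup>2 + B)"
proof -
  note mp = markov_parts[OF markov]
  have Vm[measurable]: "V \<in> borel_measurable borel" using V_cont by (rule borel_measurable_continuous_onI)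
  have Pt: "P t \<in> borel \<rightarrow>\<^sub>M prob_algebra borel" using mp(1) t .
  have Ptx: "prob_space (P t x)" "sets (P t x) = sets borel" using prob_kernel[OF Pt] by auto
  have Mxx: "prob_space (Mx x)" "sets (Mx x) = sets S" using prob_kernel[OF mp(2)] by auto
  have spM: "space (Mx x) = space S" using Mxx(2) by (rule sets_eq_imp_space_eq)
  have Xt: "X t \<in> borel_measurable (Mx x)" using mp(3)[OF t] measurable_cong_sets[OF Mxx(2) refl] by blast
  have X0: "X 0 \<in> borel_measurable (Mx x)" using mp(3)[of 0] measurable_cong_sets[OF Mxx(2) refl] by auto
  show ?thesis
  proof (rule trunc_bound)
    show "(\<lambda>\<omega>. (V (X t \<omega>))\<^sup>2) \<in> borel_measurable (Mx x)" using Xt by measurable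
    show "\<And>\<omega>. 0 \<le> (V (X t \<omega>))\<^sup>2" by simp
    fix N :: nat
    define f where "f = (\<lambda>y. min ((V y)\<^sup>2) (real N))"
    have fm[measurable]: "f \<in> borel_measurable borel" unfolding f_def by measurable
    have fb: "\<And>y. norm (f y) \<le> real N" unfolding f_def by auto
    have fbd: "bounded (range f)" using fb by (auto simp: bounded_iff)
    have top: "space S \<in> sets (nat_filtration S X 0)"
    proof -
      have "space (nat_filtration S X 0) = space S" unfolding nat_filtration_def by (rule space_measure_of_conv)
      then show ?thesis by (metis sets.top)
    qed
    have mk: "(\<integral>\<omega>. indicator (space S) \<omega> * f (X (0 + t) \<omega>) \<partial>Mx x) =
        (\<integral>\<omega>. indicator (space S) \<omega> * Pf P t f (X 0 \<omega>) \<partial>Mx x)"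
      using mp(5)[of 0 t f "space S" x] t fm fbd top by simp
    have l: "(\<integral>\<omega>. indicator (space S) \<omega> * f (X (0 + t) \<omega>) \<partial>Mx x) = (\<integral>\<omega>. f (X t \<omega>) \<partial>Mx x)"
      by (intro Bochner_Integration.integral_cong) (auto simp: spM)
    have Pfm: "Pf P t f \<in> borel_measurable borel"
    proof -
      have "(\<lambda>x. integral\<^sup>L (P t x) f) \<in> borel_measurable borel"
        using measurable_compose[OF measurable_prob_algebraD[OF Pt] integral_measurable_subprob_algebra[OF fm]] .
      then show ?thesis unfolding Pf_def[abs_def] by simp
    qed
    have r: "(\<integral>\<omega>. indicator (space S) \<omega> * Pf P t f (X 0 \<omega>) \<partial>Mx x) = (\<integral>\<omega>. Pf P t f x \<partial>Mx x)"
    proof (rule integral_cong_AE)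
      show "(\<lambda>\<omega>. indicator (space S) \<omega> * Pf P t f (X 0 \<omega>)) \<in> borel_measurable (Mx x)"
        using X0 Pfm Mxx(2) by measurable
      show "(\<lambda>\<omega>. Pf P t f x) \<in> borel_measurable (Mx x)" by simp
      show "AE \<omega> in Mx x. indicator (space S) \<omega> * Pf P t f (X 0 \<omega>) = Pf P t f x"
        using mp(4)[of x] AE_space[of "Mx x"] by eventually_elim (auto simp: spM)
    qed
    have c: "(\<integral>\<omega>. Pf P t f x \<partial>Mx x) = Pf P t f x"
      using prob_space.prob_space[OF Mxx(1)] by simp
    have eq: "(\<integral>\<omega>. f (X t \<omega>) \<partial>Mx x) = (\<integral>y. f y \<partial>P t x)"
      using mk l r c by (simp add: Pf_def)
    have i1: "integrable (Mx x) (\<lambda>\<omega>. f (X t \<omega>))"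
      using Mxx(1) fb Xt by (intro finite_measure.integrable_const_bound[where B="real N"]) (auto simp: pfin)
    have i2: "integrable (P t x) f"
      using Ptx fb by (intro finite_measure.integrable_const_bound[where B="real N"])
        (auto simp: pfin measurable_cong_sets[OF Ptx(2) refl])
    have fpos: "\<And>y. 0 \<le> f y" unfolding f_def by auto
    have "(\<integral>\<^sup>+\<omega>. ennreal (f (X t \<omega>)) \<partial>Mx x) = ennreal (\<integral>\<omega>. f (X t \<omega>) \<partial>Mx x)"
      by (rule nn_integral_eq_integral[OF i1]) (simp add: fpos)
    also have "\<dots> = ennreal (\<integral>y. f y \<partial>P t x)" using eq by simp
    also have "\<dots> = (\<integral>\<^sup>+y. ennreal (f y) \<partial>P t x)"
      by (rule nn_integral_eq_integral[OF i2, symmetric]) (simp add: fpos)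
    also have "\<dots> \<le> (\<integral>\<^sup>+y. ennreal ((V y)\<^sup>2) \<partial>P t x)"
      by (intro nn_integral_mono ennreal_leI) (simp add: f_def)
    also have "\<dots> \<le> ennreal (A * exp (- \<Gamma> * t) * (V x)\<^sup>2 + B)" using lyap[OF t] .
    finally show "(\<integral>\<^sup>+\<omega>. ennreal (min ((V (X t \<omega>))\<^sup>2) (real N)) \<partial>Mx x) \<le> ennreal (A * exp (- \<Gamma> * t) * (V x)\<^sup>2 + B)"
      by (simp add: f_def)
  qed
qed

lemma int_le_c:
  fixes f :: "'x \<Rightarrow> real"
  assumes "prob_space K" "\<And>x. \<bar>f x\<bar> \<le> c"
  shows "\<bar>integral\<^sup>L K f\<bar> \<le> c"
proof -
  have c: "0 \<le> c" using assms(2) by (meson abs_ge_zero order_trans)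
  have "(\<integral>\<^sup>+x. ennreal (norm (f x)) \<partial>K) \<le> (\<integral>\<^sup>+x. ennreal c \<partial>K)"
    using assms(2) by (intro nn_integral_mono ennreal_leI) auto
  also have "\<dots> = ennreal c" using prob_space.emeasure_space_1[OF assms(1)] by simp
  finally show ?thesis using int_bound[where f=f and M=K and c=c] c by simp
qed

lemma dfm_le:
  fixes N \<mu>s :: "'a::metric_space measure"
  assumes "prob_space N" "sets N = sets borel" "prob_space \<mu>s"
    and "BL_le1 f" "f \<in> borel_measurable borel"
  shows "\<bar>(\<integral>x. f x \<partial>N) - (\<integral>x. f x \<partial>\<mu>s)\<bar> \<le> d_FM N \<mu>s"
  unfolding d_FM_def
proof (rule cSup_upper)
  show "\<bar>(\<integral>x. f x \<partial>N) - (\<integral>x. f x \<partial>\<mu>s)\<bar> \<in> {\<bar>(\<integral>x. f x \<partial>N) - (\<integral>x. f x \<partial>\<mu>s)\<bar> | f. BL_le1 f \<and> f \<in> borel_measurable borel}"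
    using assms by blast
  show "bdd_above {\<bar>(\<integral>x. f x \<partial>N) - (\<integral>x. f x \<partial>\<mu>s)\<bar> | f. BL_le1 f \<and> f \<in> borel_measurable borel}"
  proof (rule bdd_aboveI)
    fix y assume "y \<in> {\<bar>(\<integral>x. f x \<partial>N) - (\<integral>x. f x \<partial>\<mu>s)\<bar> | f. BL_le1 f \<and> f \<in> borel_measurable borel}"
    then obtain h where h: "y = \<bar>(\<integral>x. h x \<partial>N) - (\<integral>x. h x \<partial>\<mu>s)\<bar>" "BL_le1 h" by blast
    have "\<And>x. \<bar>h x\<bar> \<le> 1" using h(2) unfolding BL_le1_def by blast
    then have "\<bar>\<integral>x. h x \<partial>N\<bar> \<le> 1" "\<bar>\<integral>x. h x \<partial>\<mu>s\<bar> \<le> 1"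
      using int_le_c assms(1,3) by blast+
    then show "y \<le> 2" using h(1) by linarith
  qed
qed

lemma Pf_bound:
  fixes P :: "real \<Rightarrow> 'a::metric_space \<Rightarrow> 'a measure" and V g :: "'a \<Rightarrow> real"
  assumes Pt: "P t \<in> borel \<rightarrow>\<^sub>M prob_algebra borel" and t: "t \<ge> 0"
    and mus: "prob_borel \<mu>s"
    and Cconv: "\<forall>\<nu>. prob_borel \<nu> \<and> (\<integral>\<^sup>+ x. ennreal (V x) \<partial>\<nu>) < \<infinity> \<longrightarrow>
           C \<nu> \<ge> 0 \<and> (\<forall>t\<ge>0. d_FM (\<nu> \<bind> P t) \<mu>s \<le> C \<nu> * exp (- \<gamma> * t))"
    and Cx: "\<forall>x. C (return borel x) = \<kappa> * sqrt (V x + 1)"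
    and V_cont: "continuous_on UNIV V"
    and L: "L-lipschitz_on UNIV g" and M: "\<And>x. \<bar>g x\<bar> \<le> M"
  shows "\<bar>Pf P t (centred \<mu>s g) x\<bar> \<le> max 1 (max L M) * (\<kappa> * sqrt (V x + 1) * exp (- \<gamma> * t))"
proof -
  define Kg where "Kg = max 1 (max L M)"
  have Kg: "Kg > 0" "L \<le> Kg" "M \<le> Kg" unfolding Kg_def by auto
  have L0: "L \<ge> 0" using L by (simp add: lipschitz_on_def)
  have Vm[measurable]: "V \<in> borel_measurable borel" using V_cont by (rule borel_measurable_continuous_onI)
  have gc: "continuous_on UNIV g" using L by (rule lipschitz_on_continuous_on)
  have gm[measurable]: "g \<in> borel_measurable borel" using gc by (rule borel_measurable_continuous_onI)
  define f where "f = (\<lambda>y. g y / Kg)"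
  have fm[measurable]: "f \<in> borel_measurable borel" unfolding f_def by measurable
  have fBL: "BL_le1 f" unfolding BL_le1_def
  proof (intro conjI allI)
    fix x y
    show "\<bar>f x\<bar> \<le> 1" using M[of x] Kg unfolding f_def by (simp add: divide_le_eq_1 abs_divide)
    have "\<bar>g x - g y\<bar> \<le> L * dist x y" using lipschitz_onD[OF L, of x y] by (simp add: dist_real_def)
    also have "\<dots> \<le> Kg * dist x y" using Kg by (intro mult_right_mono) auto
    finally show "\<bar>f x - f y\<bar> \<le> dist x y" using Kg unfolding f_def
      by (simp add: diff_divide_distrib[symmetric] abs_divide pos_divide_le_eq mult.commute)
  qed
  have Ptx: "prob_space (P t x)" "sets (P t x) = sets borel" using prob_kernel[OF Pt] by auto
  have mus': "prob_space \<mu>s" "sets \<mu>s = sets borel" using mus by (auto simp: prob_borel_def)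
  have ret: "prob_borel (return borel x)" by (simp add: prob_borel_def prob_space_return)
  have "(\<integral>\<^sup>+ y. ennreal (V y) \<partial>return borel x) = ennreal (V x)"
    by (rule nn_integral_return) auto
  then have retV: "(\<integral>\<^sup>+ y. ennreal (V y) \<partial>return borel x) < \<infinity>" by simp
  have bind: "return borel x \<bind> P t = P t x"
    by (rule bind_return[OF measurable_prob_algebraD[OF Pt]]) simp
  have dfm: "d_FM (P t x) \<mu>s \<le> \<kappa> * sqrt (V x + 1) * exp (- \<gamma> * t)"
    using Cconv ret retV t Cx bind by metis
  have ig: "integrable (P t x) g"
    using Ptx M by (intro finite_measure.integrable_const_bound[where B=M])
        (auto simp: pfin measurable_cong_sets[OF Ptx(2) refl])
  have "Pf P t (centred \<mu>s g) x = (\<integral>y. g y \<partial>P t x) - (\<integral>y. g y \<partial>\<mu>s)"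
    unfolding Pf_def centred_def
    using prob_space.prob_space[OF Ptx(1)]
    by (subst Bochner_Integration.integral_diff[OF ig finite_measure.integrable_const[OF pfin[OF Ptx(1)]]]) simp
  also have "\<dots> = Kg * ((\<integral>y. f y \<partial>P t x) - (\<integral>y. f y \<partial>\<mu>s))"
    using Kg unfolding f_def by (simp add: integral_divide_zero right_diff_distrib)
  finally have "\<bar>Pf P t (centred \<mu>s g) x\<bar> = Kg * \<bar>(\<integral>y. f y \<partial>P t x) - (\<integral>y. f y \<partial>\<mu>s)\<bar>"
    using Kg by (simp add: abs_mult)
  also have "\<dots> \<le> Kg * d_FM (P t x) \<mu>s"
    using dfm_le[OF Ptx mus'(1) fBL fm] Kg by (intro mult_left_mono) auto
  also have "\<dots> \<le> Kg * (\<kappa> * sqrt (V x + 1) * exp (- \<gamma> * t))"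
    using dfm Kg by (intro mult_left_mono) auto
  finally show ?thesis unfolding Kg_def .
qed

lemma exp_dens_int: "0 < l \<Longrightarrow> (\<integral>\<^sup>+ x. ennreal (exponential_density l x) \<partial>lborel) = 1"
  using nn_integral_erlang_ith_moment[of l 0 0] by simp

lemma chi_bound:
  fixes F :: "real \<Rightarrow> real"
  assumes "\<And>t. t \<ge> 0 \<Longrightarrow> \<bar>F t\<bar> \<le> K * exp (- \<gamma> * t)" "\<gamma> > 0" "K \<ge> 0"
  shows "\<bar>LINT t:{0..}|lborel. F t\<bar> \<le> K / \<gamma>"
proof -
  have "(\<integral>\<^sup>+t. ennreal (norm (indicator {0..} t *\<^sub>R F t)) \<partial>lborel) \<le>
      (\<integral>\<^sup>+t. ennreal (K / \<gamma>) * ennreal (exponential_density \<gamma> t) \<partial>lborel)"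
  proof (intro nn_integral_mono)
    fix t :: real
    show "ennreal (norm (indicator {0..} t *\<^sub>R F t)) \<le> ennreal (K / \<gamma>) * ennreal (exponential_density \<gamma> t)"
    proof (cases "t \<ge> 0")
      case True
      have "\<bar>F t\<bar> \<le> K / \<gamma> * (\<gamma> * exp (- t * \<gamma>))" using assms(1)[OF True] assms(2)
        by (simp add: mult.commute)
      then show ?thesis using True assms(2,3)
        by (simp add: exponential_density_def ennreal_mult[symmetric])
    qed simp
  qed
  also have "\<dots> = ennreal (K / \<gamma>) * (\<integral>\<^sup>+t. ennreal (exponential_density \<gamma> t) \<partial>lborel)"
    by (rule nn_integral_cmult) measurable
  also have "\<dots> = ennreal (K / \<gamma>)" using exp_dens_int[OF assms(2)] by simp
  finally show ?thesis unfolding set_lebesgue_integral_def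
    using int_bound assms(2,3) by (metis real_norm_def divide_nonneg_pos)
qed

lemma path_bound:
  fixes h :: "real \<Rightarrow> real"
  assumes "\<And>s. \<bar>h s\<bar> \<le> c" "a \<le> b"
  shows "\<bar>LINT s:{a..b}|lborel. h s\<bar> \<le> c * (b - a)"
proof -
  have c: "0 \<le> c" using assms(1) by (meson abs_ge_zero order_trans)
  have "(\<integral>\<^sup>+s. ennreal (norm (indicator {a..b} s *\<^sub>R h s)) \<partial>lborel) \<le>
      (\<integral>\<^sup>+s. ennreal c * indicator {a..b} s \<partial>lborel)"
    using assms(1) by (intro nn_integral_mono) (auto intro: ennreal_leI split: split_indicator)
  also have "\<dots> = ennreal c * emeasure lborel {a..b}" by (rule nn_integral_cmult_indicator) simp
  also have "\<dots> = ennreal (c * (b - a))" using assms(2) c by (simp add: ennreal_mult)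
  finally show ?thesis unfolding set_lebesgue_integral_def
    using int_bound assms(2) c by (metis real_norm_def diff_ge_0_iff_ge mult_nonneg_nonneg)
qed

lemma exp_seq_lim: "\<Gamma> > 0 \<Longrightarrow> (\<lambda>n. a * exp (- \<Gamma> * real n) * v + b) \<longlonglongrightarrow> (b::real)"
proof -
  assume G: "\<Gamma> > 0"
  have e: "exp (- \<Gamma> * real n) = exp (- \<Gamma>) ^ n" for n by (simp add: exp_of_nat_mult[symmetric] mult.commute)
  have "norm (exp (- \<Gamma>)) < 1" using G by simp
  then have l0: "(\<lambda>n. exp (- \<Gamma>) ^ n) \<longlonglongrightarrow> 0" by (rule LIMSEQ_power_zero)
  have "(\<lambda>n. a * exp (- \<Gamma> * real n) * v + b) \<longlonglongrightarrow> a * 0 * v + b" unfolding e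
    by (rule tendsto_add[OF tendsto_mult[OF tendsto_mult[OF tendsto_const l0] tendsto_const] tendsto_const])
  then show ?thesis by simp
qed

lemma mus_bound:
  fixes V :: "'a::topological_space \<Rightarrow> real"
  assumes inv: "invariant P \<mu>s"
    and Pk: "\<And>t. t \<ge> 0 \<Longrightarrow> P t \<in> borel \<rightarrow>\<^sub>M prob_algebra borel"
    and V_cont: "continuous_on UNIV V"
    and lyap: "\<And>x t. t \<ge> 0 \<Longrightarrow>
        (\<integral>\<^sup>+ y. ennreal ((V y)\<^sup>2) \<partial>(P t x)) \<le> ennreal (A * exp (- \<Gamma> * t) * (V x)\<^sup>2 + B)"
    and G: "\<Gamma> > 0" and B: "B \<ge> 0" and A0: "A \<ge> 0"
  shows "(\<integral>\<^sup>+ x. ennreal ((V x)\<^sup>2) \<partial>\<mu>s) \<le> ennreal B"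
proof -
  have Vm[measurable]: "V \<in> borel_measurable borel" using V_cont by (rule borel_measurable_continuous_onI)
  have mus: "prob_space \<mu>s" "sets \<mu>s = sets borel" using inv by (auto simp: invariant_def prob_borel_def)
  have bindeq: "\<And>t. t \<ge> 0 \<Longrightarrow> \<mu>s \<bind> P t = \<mu>s" using inv by (auto simp: invariant_def)
  show ?thesis
  proof (rule trunc_bound)
    show "(\<lambda>x. (V x)\<^sup>2) \<in> borel_measurable \<mu>s" unfolding measurable_cong_sets[OF mus(2) refl] by measurable
    show "\<And>x. 0 \<le> (V x)\<^sup>2" by simp
    fix N :: nat
    define fN where "fN = (\<lambda>n::nat. \<lambda>y. min (ennreal (real N)) (ennreal (A * exp (- \<Gamma> * real n) * (V y)\<^sup>2 + B)))"
    have fNm[measurable]: "\<And>n. fN n \<in> borel_measurable \<mu>s"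
      unfolding measurable_cong_sets[OF mus(2) refl] fN_def by measurable
    have step: "(\<integral>\<^sup>+ x. ennreal (min ((V x)\<^sup>2) (real N)) \<partial>\<mu>s) \<le> integral\<^sup>N \<mu>s (fN n)" for n
    proof -
      have Pn: "P (real n) \<in> borel \<rightarrow>\<^sub>M prob_algebra borel" using Pk by simp
      have Pn': "P (real n) \<in> \<mu>s \<rightarrow>\<^sub>M subprob_algebra borel"
        using measurable_prob_algebraD[OF Pn] unfolding measurable_cong_sets[OF mus(2) refl] .
      have "(\<integral>\<^sup>+ x. ennreal (min ((V x)\<^sup>2) (real N)) \<partial>\<mu>s) =
          (\<integral>\<^sup>+ x. ennreal (min ((V x)\<^sup>2) (real N)) \<partial>(\<mu>s \<bind> P (real n)))"
        using bindeq[of "real n"] by simp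
      also have "\<dots> = (\<integral>\<^sup>+ y. \<integral>\<^sup>+ x. ennreal (min ((V x)\<^sup>2) (real N)) \<partial>P (real n) y \<partial>\<mu>s)"
        by (rule nn_integral_bind[OF _ Pn']) measurable
      also have "\<dots> \<le> integral\<^sup>N \<mu>s (fN n)"
        unfolding fN_def
      proof (intro nn_integral_mono min.boundedI)
        fix y
        have Py: "prob_space (P (real n) y)" using prob_kernel[OF Pn] by simp
        have "(\<integral>\<^sup>+ x. ennreal (min ((V x)\<^sup>2) (real N)) \<partial>P (real n) y) \<le> (\<integral>\<^sup>+ x. ennreal (real N) \<partial>P (real n) y)"
          by (intro nn_integral_mono ennreal_leI) simp
        also have "\<dots> = ennreal (real N)" using prob_space.emeasure_space_1[OF Py] by simp
        finally show "(\<integral>\<^sup>+ x. ennreal (min ((V x)\<^sup>2) (real N)) \<partial>P (real n) y) \<le> ennreal (real N)" .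
        have "(\<integral>\<^sup>+ x. ennreal (min ((V x)\<^sup>2) (real N)) \<partial>P (real n) y) \<le> (\<integral>\<^sup>+ x. ennreal ((V x)\<^sup>2) \<partial>P (real n) y)"
          by (intro nn_integral_mono ennreal_leI) simp
        also have "\<dots> \<le> ennreal (A * exp (- \<Gamma> * real n) * (V y)\<^sup>2 + B)" using lyap[of "real n" y] by simp
        finally show "(\<integral>\<^sup>+ x. ennreal (min ((V x)\<^sup>2) (real N)) \<partial>P (real n) y) \<le> ennreal (A * exp (- \<Gamma> * real n) * (V y)\<^sup>2 + B)" .
      qed
      finally show ?thesis .
    qed
    have "(\<integral>\<^sup>+ x. ennreal (min ((V x)\<^sup>2) (real N)) \<partial>\<mu>s) \<le> (INF n. integral\<^sup>N \<mu>s (fN n))"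
      using step by (intro INF_greatest) auto
    also have "\<dots> = (\<integral>\<^sup>+ x. (INF n. fN n x) \<partial>\<mu>s)"
    proof (rule nn_integral_monotone_convergence_INF_decseq[symmetric])
      show "decseq fN" unfolding fN_def
      proof (intro decseq_SucI le_funI min.mono order.refl ennreal_leI add_right_mono mult_right_mono)
        fix n :: nat and x
        show "A * exp (- \<Gamma> * real (Suc n)) \<le> A * exp (- \<Gamma> * real n)"
          using A0 G by (intro mult_left_mono) auto
      qed simp
      show "\<And>i. fN i \<in> borel_measurable \<mu>s" by simp
      have "integral\<^sup>N \<mu>s (fN 0) \<le> (\<integral>\<^sup>+ x. ennreal (real N) \<partial>\<mu>s)"
        unfolding fN_def by (intro nn_integral_mono) simp
      also have "\<dots> = ennreal (real N)" using prob_space.emeasure_space_1[OF mus(1)] by simp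
      finally show "integral\<^sup>N \<mu>s (fN 0) < \<infinity>" using le_less_trans by fastforce
    qed
    also have "\<dots> \<le> (\<integral>\<^sup>+ x. ennreal B \<partial>\<mu>s)"
    proof (intro nn_integral_mono)
      fix x
      have lim: "(\<lambda>n. ennreal (A * exp (- \<Gamma> * real n) * (V x)\<^sup>2 + B)) \<longlonglongrightarrow> ennreal B"
        using exp_seq_lim[OF G] by (intro tendsto_ennrealI)
      show "(INF n. fN n x) \<le> ennreal B"
      proof (rule LIMSEQ_le_const[OF lim])
        show "\<exists>N. \<forall>n\<ge>N. (INF n. fN n x) \<le> ennreal (A * exp (- \<Gamma> * real n) * (V x)\<^sup>2 + B)"
        proof (intro exI allI impI)
          fix n :: nat
          have "(INF n. fN n x) \<le> fN n x" by (rule INF_lower) simp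
          also have "\<dots> \<le> ennreal (A * exp (- \<Gamma> * real n) * (V x)\<^sup>2 + B)" unfolding fN_def by simp
          finally show "(INF n. fN n x) \<le> ennreal (A * exp (- \<Gamma> * real n) * (V x)\<^sup>2 + B)" .
        qed
      qed
    qed
    also have "\<dots> = ennreal B" using prob_space.emeasure_space_1[OF mus(1)] by simp
    finally show "(\<integral>\<^sup>+ x. ennreal (min ((V x)\<^sup>2) (real N)) \<partial>\<mu>s) \<le> ennreal B" .
  qed
qed

lemma outer:
  fixes V :: "'a::topological_space \<Rightarrow> real" and F :: "'a \<Rightarrow> ennreal"
  assumes nu: "prob_borel \<nu>" and nuM: "(\<integral>\<^sup>+ x. ennreal ((V x)\<^sup>2) \<partial>\<nu>) = ennreal Mn" and Mn: "Mn \<ge> 0"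
    and Pt: "P t \<in> borel \<rightarrow>\<^sub>M prob_algebra borel" and t: "t \<ge> 0"
    and lyap: "\<And>x. (\<integral>\<^sup>+ y. ennreal ((V y)\<^sup>2) \<partial>(P t x)) \<le> ennreal (A * exp (- \<Gamma> * t) * (V x)\<^sup>2 + B)"
    and Vm[measurable]: "V \<in> borel_measurable borel"
    and G: "\<Gamma> > 0" and pos: "\<alpha> \<ge> 0" "\<beta> \<ge> 0" "A \<ge> 0" "B \<ge> 0" "s \<ge> 0"
    and F: "\<And>x. F x \<le> ennreal (\<alpha> + \<beta> * exp (- \<Gamma> * s) * (V x)\<^sup>2)"
  shows "(\<integral>\<^sup>+ x. F x \<partial>(\<nu> \<bind> P t)) \<le> ennreal ((\<beta> * A * Mn) * exp (- \<Gamma> * (s + t)) + (\<alpha> + \<beta> * B))"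
proof -
  have nu': "prob_space \<nu>" "sets \<nu> = sets borel" using nu by (auto simp: prob_borel_def)
  have nuA: "\<nu> \<in> space (prob_algebra borel)" using nu' by (simp add: space_prob_algebra)
  have Pt': "P t \<in> \<nu> \<rightarrow>\<^sub>M subprob_algebra borel"
    using measurable_prob_algebraD[OF Pt] unfolding measurable_cong_sets[OF nu'(2) refl] .
  have bp: "prob_space (\<nu> \<bind> P t)" by (rule prob_space_bind'[OF nuA Pt])
  have bs: "sets (\<nu> \<bind> P t) = sets borel" by (rule sets_bind'[OF nuA Pt])
  have e1: "exp (- \<Gamma> * s) \<ge> 0" by simp
  have "(\<integral>\<^sup>+ x. F x \<partial>(\<nu> \<bind> P t)) \<le> (\<integral>\<^sup>+ x. ennreal \<alpha> + ennreal (\<beta> * exp (- \<Gamma> * s)) * ennreal ((V x)\<^sup>2) \<partial>(\<nu> \<bind> P t))"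
    using F pos e1 by (intro nn_integral_mono) (simp add: ennreal_mult)
  also have "\<dots> = ennreal \<alpha> + ennreal (\<beta> * exp (- \<Gamma> * s)) * (\<integral>\<^sup>+ x. ennreal ((V x)\<^sup>2) \<partial>(\<nu> \<bind> P t))"
    using prob_space.emeasure_space_1[OF bp]
    by (subst nn_integral_add) (auto simp: measurable_cong_sets[OF bs refl] nn_integral_cmult)
  also have "(\<integral>\<^sup>+ x. ennreal ((V x)\<^sup>2) \<partial>(\<nu> \<bind> P t)) = (\<integral>\<^sup>+ y. \<integral>\<^sup>+ x. ennreal ((V x)\<^sup>2) \<partial>P t y \<partial>\<nu>)"
    by (rule nn_integral_bind[OF _ Pt']) measurable
  also have "\<dots> \<le> (\<integral>\<^sup>+ y. ennreal (A * exp (- \<Gamma> * t)) * ennreal ((V y)\<^sup>2) + ennreal B \<partial>\<nu>)"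
    using lyap pos by (intro nn_integral_mono) (simp add: ennreal_mult)
  also have "\<dots> = ennreal (A * exp (- \<Gamma> * t)) * ennreal Mn + ennreal B"
    using prob_space.emeasure_space_1[OF nu'(1)] nuM
    by (subst nn_integral_add) (auto simp: measurable_cong_sets[OF nu'(2) refl] nn_integral_cmult)
  also have "\<dots> = ennreal (A * exp (- \<Gamma> * t) * Mn + B)"
    using pos Mn by (simp add: ennreal_mult)
  finally have "(\<integral>\<^sup>+ x. F x \<partial>(\<nu> \<bind> P t)) \<le> ennreal \<alpha> + ennreal (\<beta> * exp (- \<Gamma> * s)) * ennreal (A * exp (- \<Gamma> * t) * Mn + B)"
    by (simp add: mult_left_mono add_left_mono)
  also have "\<dots> = ennreal (\<alpha> + (\<beta> * exp (- \<Gamma> * s)) * (A * exp (- \<Gamma> * t) * Mn + B))"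
    using pos Mn by (simp add: ennreal_mult)
  also have "\<dots> \<le> ennreal ((\<beta> * A * Mn) * exp (- \<Gamma> * (s + t)) + (\<alpha> + \<beta> * B))"
  proof (rule ennreal_leI)
    have es: "exp (- \<Gamma> * s) \<le> 1" using G pos(5) by simp
    have "(\<beta> * exp (- \<Gamma> * s)) * (A * exp (- \<Gamma> * t) * Mn + B) =
        (\<beta> * A * Mn) * (exp (- \<Gamma> * s) * exp (- \<Gamma> * t)) + \<beta> * B * exp (- \<Gamma> * s)"
      by (simp add: algebra_simps)
    also have "exp (- \<Gamma> * s) * exp (- \<Gamma> * t) = exp (- \<Gamma> * (s + t))"
      by (simp add: exp_add[symmetric] algebra_simps)
    also have "\<beta> * B * exp (- \<Gamma> * s) \<le> \<beta> * B"
      using es pos by (simp add: mult_left_le)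
    finally show "\<alpha> + (\<beta> * exp (- \<Gamma> * s)) * (A * exp (- \<Gamma> * t) * Mn + B) \<le> (\<beta> * A * Mn) * exp (- \<Gamma> * (s + t)) + (\<alpha> + \<beta> * B)"
      by simp
  qed
  finally show ?thesis .
qed

theorem lemma3p8:
  fixes S :: "'w measure" and Mx :: "'a::polish_space \<Rightarrow> 'w measure"
    and X :: "real \<Rightarrow> 'w \<Rightarrow> 'a" and P :: "real \<Rightarrow> 'a \<Rightarrow> 'a measure"
    and \<mu> \<mu>s :: "'a measure" and V g :: "'a \<Rightarrow> real"
    and \<gamma> \<kappa> A B \<Gamma> :: real
  assumes markov: "markov_family S Mx X P"
    and init: "prob_borel \<mu>"
    and V_cont: "continuous_on UNIV V" and V_nonneg: "\<And>x. V x \<ge> 0"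
    and feller: "\<And>t f. t \<ge> 0 \<Longrightarrow> continuous_on UNIV f \<Longrightarrow> bounded (range f) \<Longrightarrow>
        continuous_on UNIV (Pf P t f) \<and> bounded (range (Pf P t f))"
    and inv: "invariant P \<mu>s"
    and inv_unique: "\<And>\<nu>. invariant P \<nu> \<Longrightarrow> \<nu> = \<mu>s"
    and \<gamma>_pos: "\<gamma> > 0" and \<kappa>_pos: "\<kappa> > 0"
    and conv: "\<exists>C :: 'a measure \<Rightarrow> real.
        (\<forall>\<nu>. prob_borel \<nu> \<and> (\<integral>\<^sup>+ x. ennreal (V x) \<partial>\<nu>) < \<infinity> \<longrightarrow>
           C \<nu> \<ge> 0 \<and> (\<forall>t\<ge>0. d_FM (\<nu> \<bind> P t) \<mu>s \<le> C \<nu> * exp (- \<gamma> * t))) \<and>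
        (\<forall>x. C (return borel x) = \<kappa> * sqrt (V x + 1))"
    and lyap_consts: "A \<ge> 0" "B \<ge> 0" "\<Gamma> > 0"
    and lyap: "\<And>x t. t \<ge> 0 \<Longrightarrow>
        (\<integral>\<^sup>+ y. ennreal ((V y)\<^sup>2) \<partial>(P t x)) \<le> ennreal (A * exp (- \<Gamma> * t) * (V x)\<^sup>2 + B)"
    and init_mom: "(\<integral>\<^sup>+ x. ennreal ((V x)\<^sup>2) \<partial>\<mu>) < \<infinity>"
    and g_lip: "\<exists>L. L-lipschitz_on UNIV g" and g_bdd: "bounded (range g)"
  shows "\<forall>p. 0 < p \<and> p \<le> 4 \<longrightarrow>
     (\<exists>At Bt \<Gamma>p. At \<ge> 0 \<and> Bt \<ge> 0 \<and> \<Gamma>p > 0 \<and>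
        (\<forall>i t. i \<ge> 1 \<longrightarrow> t \<ge> 0 \<longrightarrow>
           (\<integral>\<^sup>+ x. (\<integral>\<^sup>+ \<omega>. ennreal (\<bar>Zinc P \<mu>s g X i \<omega>\<bar> powr p) \<partial>Mx x) \<partial>(\<mu> \<bind> P t))
             \<le> ennreal (At * exp (- \<Gamma>p * (real i + t)) + Bt)) \<and>
        (SUP i\<in>{1..}. \<integral>\<^sup>+ x. (\<integral>\<^sup>+ \<omega>. ennreal (\<bar>Zinc P \<mu>s g X i \<omega>\<bar> powr p) \<partial>Mx x) \<partial>\<mu>s) < \<infinity>)"
proof -
  note mp = markov_parts[OF markov]
  obtain C :: "'a measure \<Rightarrow> real" where
    C1: "\<forall>\<nu>. prob_borel \<nu> \<and> (\<integral>\<^sup>+ x. ennreal (V x) \<partial>\<nu>) < \<infinity> \<longrightarrow>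
           C \<nu> \<ge> 0 \<and> (\<forall>t\<ge>0. d_FM (\<nu> \<bind> P t) \<mu>s \<le> C \<nu> * exp (- \<gamma> * t))" and
    C2: "\<forall>x. C (return borel x) = \<kappa> * sqrt (V x + 1)" using conv by blast
  obtain L where L: "L-lipschitz_on UNIV g" using g_lip by blast
  obtain M where M: "\<And>x. \<bar>g x\<bar> \<le> M" using g_bdd unfolding bounded_iff by auto
  have M0: "M \<ge> 0" using M[of undefined] by linarith
  have Vm[measurable]: "V \<in> borel_measurable borel" using V_cont by (rule borel_measurable_continuous_onI)
  have mus: "prob_borel \<mu>s" using inv by (simp add: invariant_def)
  have mus': "prob_space \<mu>s" "sets \<mu>s = sets borel" using mus by (auto simp: prob_borel_def)
  define K1 where "K1 = max 1 (max L M) * \<kappa>"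
  have K1: "K1 \<ge> 0" unfolding K1_def using \<kappa>_pos by simp
  have chib: "\<bar>chi P \<mu>s g x\<bar> \<le> K1 * sqrt (V x + 1) / \<gamma>" for x
    unfolding chi_def
  proof (rule chi_bound)
    fix t :: real assume t: "t \<ge> 0"
    show "\<bar>Pf P t (centred \<mu>s g) x\<bar> \<le> K1 * sqrt (V x + 1) * exp (- \<gamma> * t)"
      using Pf_bound[OF mp(1)[OF t] t mus C1 C2 V_cont L M] unfolding K1_def by (simp add: mult.assoc)
  qed (use \<gamma>_pos K1 V_nonneg in auto)
  have intg: "\<bar>\<integral>y. g y \<partial>\<mu>s\<bar> \<le> M" using int_le_c[OF mus'(1) M] .
  have cgb: "\<bar>centred \<mu>s g y\<bar> \<le> 2 * M" for y
    unfolding centred_def using M[of y] intg by linarith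
  define D where "D = K1 / \<gamma> + 2 * M"
  have D0: "D \<ge> 0" unfolding D_def using K1 \<gamma>_pos M0 by simp
  have Zb: "\<bar>Zinc P \<mu>s g X i \<omega>\<bar> \<le> D * (sqrt (V (X (real i) \<omega>) + 1) + sqrt (V (X (real i - 1) \<omega>) + 1))" for i \<omega>
  proof -
    define a where "a = sqrt (V (X (real i) \<omega>) + 1)"
    define b where "b = sqrt (V (X (real i - 1) \<omega>) + 1)"
    have a1: "a \<ge> 1" "b \<ge> 1" unfolding a_def b_def using V_nonneg by auto
    have p: "\<bar>LINT s:{real i - 1..real i}|lborel. centred \<mu>s g (X s \<omega>)\<bar> \<le> 2 * M * (real i - (real i - 1))"
      by (rule path_bound) (use cgb in auto)
    then have p': "\<bar>LINT s:{real i - 1..real i}|lborel. centred \<mu>s g (X s \<omega>)\<bar> \<le> 2 * M" by simp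
    have "\<bar>Zinc P \<mu>s g X i \<omega>\<bar> \<le> K1 * a / \<gamma> + K1 * b / \<gamma> + 2 * M"
      unfolding Zinc_def a_def b_def using chib[of "X (real i) \<omega>"] chib[of "X (real i - 1) \<omega>"] p'
      by (smt (verit))
    also have "\<dots> \<le> D * (a + b)"
    proof -
      have h1: "M * 1 \<le> M * a" using a1 M0 by (intro mult_left_mono) auto
      have h2: "0 \<le> M * b" using a1 M0 by simp
      have h3: "D * (a + b) = K1 * a / \<gamma> + K1 * b / \<gamma> + 2 * (M * a) + 2 * (M * b)"
        unfolding D_def by (simp add: algebra_simps add_divide_distrib)
      show ?thesis using h1 h2 h3 by linarith
    qed
    finally show ?thesis unfolding a_def b_def .
  qed
  define c0 where "c0 = 1 + 32 * D^4"
  define c1 where "c1 = 16 * D^4"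
  have c01: "c0 \<ge> 0" "c1 \<ge> 0" unfolding c0_def c1_def using D0 by auto
  have powb: "\<bar>Zinc P \<mu>s g X i \<omega>\<bar> powr p \<le> c0 + c1 * (V (X (real i) \<omega>))\<^sup>2 + c1 * (V (X (real i - 1) \<omega>))\<^sup>2"
    if "0 < p" "p \<le> 4" for i \<omega> p
  proof -
    have "\<bar>Zinc P \<mu>s g X i \<omega>\<bar> powr p \<le> 1 + 16 * D^4 * ((V (X (real i) \<omega>))\<^sup>2 + (V (X (real i - 1) \<omega>))\<^sup>2 + 2)"
      by (rule powr_bound) (use Zb V_nonneg that D0 in auto)
    then show ?thesis unfolding c0_def c1_def by (simp add: algebra_simps)
  qed
  define \<alpha> where "\<alpha> = c0 + 2 * c1 * B"
  define \<beta> where "\<beta> = c1 * A * (1 + exp \<Gamma>)"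
  have \<alpha>\<beta>: "\<alpha> \<ge> 0" "\<beta> \<ge> 0" unfolding \<alpha>_def \<beta>_def using c01 lyap_consts by auto
  have inner: "(\<integral>\<^sup>+ \<omega>. ennreal (\<bar>Zinc P \<mu>s g X i \<omega>\<bar> powr p) \<partial>Mx x) \<le> ennreal (\<alpha> + \<beta> * exp (- \<Gamma> * real i) * (V x)\<^sup>2)"
    if "0 < p" "p \<le> 4" "i \<ge> 1" for i p x
  proof -
    have t1: "real i \<ge> 0" "real i - 1 \<ge> 0" using that by auto
    have Mxx: "prob_space (Mx x)" "sets (Mx x) = sets S" using prob_kernel[OF mp(2)] by auto
    have Xm: "X s \<in> borel_measurable (Mx x)" if "s \<ge> 0" for s
      using mp(3)[OF that] unfolding measurable_cong_sets[OF Mxx(2) refl] .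
    have "(\<integral>\<^sup>+ \<omega>. ennreal (\<bar>Zinc P \<mu>s g X i \<omega>\<bar> powr p) \<partial>Mx x) \<le>
        (\<integral>\<^sup>+ \<omega>. ennreal c0 + (ennreal c1 * ennreal ((V (X (real i) \<omega>))\<^sup>2) + ennreal c1 * ennreal ((V (X (real i - 1) \<omega>))\<^sup>2)) \<partial>Mx x)"
    proof (intro nn_integral_mono)
      fix \<omega>
      have "ennreal (\<bar>Zinc P \<mu>s g X i \<omega>\<bar> powr p) \<le> ennreal (c0 + (c1 * (V (X (real i) \<omega>))\<^sup>2 + c1 * (V (X (real i - 1) \<omega>))\<^sup>2))"
        by (rule ennreal_leI) (use powb[OF that(1,2), of i \<omega>] in \<open>simp add: add.assoc\<close>)
      also have "\<dots> = ennreal c0 + (ennreal c1 * ennreal ((V (X (real i) \<omega>))\<^sup>2) + ennreal c1 * ennreal ((V (X (real i - 1) \<omega>))\<^sup>2))"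
        using c01 by (simp add: ennreal_mult)
      finally show "ennreal (\<bar>Zinc P \<mu>s g X i \<omega>\<bar> powr p) \<le> ennreal c0 + (ennreal c1 * ennreal ((V (X (real i) \<omega>))\<^sup>2) + ennreal c1 * ennreal ((V (X (real i - 1) \<omega>))\<^sup>2))" .
    qed
    also have "\<dots> = ennreal c0 + (ennreal c1 * (\<integral>\<^sup>+ \<omega>. ennreal ((V (X (real i) \<omega>))\<^sup>2) \<partial>Mx x) +
        ennreal c1 * (\<integral>\<^sup>+ \<omega>. ennreal ((V (X (real i - 1) \<omega>))\<^sup>2) \<partial>Mx x))"
      using prob_space.emeasure_space_1[OF Mxx(1)] Xm[OF t1(1)] Xm[OF t1(2)]
      by (simp add: nn_integral_add nn_integral_cmult)
    also have "\<dots> \<le> ennreal c0 + (ennreal c1 * ennreal (A * exp (- \<Gamma> * real i) * (V x)\<^sup>2 + B) +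
        ennreal c1 * ennreal (A * exp (- \<Gamma> * (real i - 1)) * (V x)\<^sup>2 + B))"
      using E_bound[OF markov V_cont lyap t1(1)] E_bound[OF markov V_cont lyap t1(2)]
      by (intro add_mono mult_left_mono order.refl) auto
    also have "\<dots> = ennreal (c0 + c1 * (A * exp (- \<Gamma> * real i) * (V x)\<^sup>2 + B) +
        c1 * (A * exp (- \<Gamma> * (real i - 1)) * (V x)\<^sup>2 + B))"
      using c01 lyap_consts by (simp add: ennreal_mult)
    also have "\<dots> = ennreal (\<alpha> + \<beta> * exp (- \<Gamma> * real i) * (V x)\<^sup>2)"
    proof -
      have "exp (- \<Gamma> * (real i - 1)) = exp \<Gamma> * exp (- \<Gamma> * real i)"
        by (simp add: exp_add[symmetric] algebra_simps)
      then show ?thesis unfolding \<alpha>_def \<beta>_def by (simp add: algebra_simps)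
    qed
    finally show ?thesis .
  qed
  show ?thesis
  proof (intro allI impI)
    fix p :: real assume p: "0 < p \<and> p \<le> 4"
    obtain Mmu where Mmu: "(\<integral>\<^sup>+ x. ennreal ((V x)\<^sup>2) \<partial>\<mu>) = ennreal Mmu" "Mmu \<ge> 0"
      using init_mom by (cases "(\<integral>\<^sup>+ x. ennreal ((V x)\<^sup>2) \<partial>\<mu>)") auto
    have musb: "(\<integral>\<^sup>+ x. ennreal ((V x)\<^sup>2) \<partial>\<mu>s) \<le> ennreal B"
      by (rule mus_bound[OF inv mp(1) V_cont lyap]) (use lyap_consts in auto)
    obtain Ms where Ms: "(\<integral>\<^sup>+ x. ennreal ((V x)\<^sup>2) \<partial>\<mu>s) = ennreal Ms" "Ms \<ge> 0"
      using musb by (cases "(\<integral>\<^sup>+ x. ennreal ((V x)\<^sup>2) \<partial>\<mu>s)") (auto simp: top_unique)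
    have main: "(\<integral>\<^sup>+ x. (\<integral>\<^sup>+ \<omega>. ennreal (\<bar>Zinc P \<mu>s g X i \<omega>\<bar> powr p) \<partial>Mx x) \<partial>(\<nu> \<bind> P t))
        \<le> ennreal ((\<beta> * A * Mn) * exp (- \<Gamma> * (real i + t)) + (\<alpha> + \<beta> * B))"
      if "prob_borel \<nu>" "(\<integral>\<^sup>+ x. ennreal ((V x)\<^sup>2) \<partial>\<nu>) = ennreal Mn" "Mn \<ge> 0" "i \<ge> 1" "t \<ge> 0" for \<nu> Mn i t
      by (rule outer[where P=P and t=t and V=V and A=A and B=B and \<Gamma>=\<Gamma> and \<alpha>=\<alpha> and \<beta>=\<beta> and s="real i", OF that(1,2,3) mp(1)[OF that(5)] that(5) lyap[OF that(5)] Vm lyap_consts(3) \<alpha>\<beta> lyap_consts(1,2)])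
        (use inner p that in auto)
    show "\<exists>At Bt \<Gamma>p. At \<ge> 0 \<and> Bt \<ge> 0 \<and> \<Gamma>p > 0 \<and>
        (\<forall>i t. i \<ge> 1 \<longrightarrow> t \<ge> 0 \<longrightarrow>
           (\<integral>\<^sup>+ x. (\<integral>\<^sup>+ \<omega>. ennreal (\<bar>Zinc P \<mu>s g X i \<omega>\<bar> powr p) \<partial>Mx x) \<partial>(\<mu> \<bind> P t))
             \<le> ennreal (At * exp (- \<Gamma>p * (real i + t)) + Bt)) \<and>
        (SUP i\<in>{1..}. \<integral>\<^sup>+ x. (\<integral>\<^sup>+ \<omega>. ennreal (\<bar>Zinc P \<mu>s g X i \<omega>\<bar> powr p) \<partial>Mx x) \<partial>\<mu>s) < \<infinity>"
    proof (intro exI conjI allI impI)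
      show "\<beta> * A * Mmu \<ge> 0" using \<alpha>\<beta> lyap_consts Mmu by simp
      show "\<alpha> + \<beta> * B \<ge> 0" using \<alpha>\<beta> lyap_consts by simp
      show "\<Gamma> > 0" using lyap_consts by simp
      fix i :: nat and t :: real assume "i \<ge> 1" "t \<ge> 0"
      then show "(\<integral>\<^sup>+ x. (\<integral>\<^sup>+ \<omega>. ennreal (\<bar>Zinc P \<mu>s g X i \<omega>\<bar> powr p) \<partial>Mx x) \<partial>(\<mu> \<bind> P t))
             \<le> ennreal ((\<beta> * A * Mmu) * exp (- \<Gamma> * (real i + t)) + (\<alpha> + \<beta> * B))"
        using main[OF init Mmu] by simp
    next
      have b0: "\<mu>s \<bind> P 0 = \<mu>s" using inv by (simp add: invariant_def)
      have "(SUP i\<in>{1..}. \<integral>\<^sup>+ x. (\<integral>\<^sup>+ \<omega>. ennreal (\<bar>Zinc P \<mu>s g X i \<omega>\<bar> powr p) \<partial>Mx x) \<partial>\<mu>s)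
          \<le> ennreal (\<beta> * A * Ms + (\<alpha> + \<beta> * B))"
      proof (rule SUP_least)
        fix i :: nat assume i: "i \<in> {1..}"
        have "(\<integral>\<^sup>+ x. (\<integral>\<^sup>+ \<omega>. ennreal (\<bar>Zinc P \<mu>s g X i \<omega>\<bar> powr p) \<partial>Mx x) \<partial>\<mu>s)
            \<le> ennreal ((\<beta> * A * Ms) * exp (- \<Gamma> * (real i + 0)) + (\<alpha> + \<beta> * B))"
          using main[OF mus Ms, of i 0] i b0 by simp
        also have "\<dots> \<le> ennreal (\<beta> * A * Ms + (\<alpha> + \<beta> * B))"
        proof (rule ennreal_leI)
          have "exp (- \<Gamma> * (real i + 0)) \<le> 1" using lyap_consts by simp
          moreover have "\<beta> * A * Ms \<ge> 0" using \<alpha>\<beta> lyap_consts Ms by simp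
          ultimately show "(\<beta> * A * Ms) * exp (- \<Gamma> * (real i + 0)) + (\<alpha> + \<beta> * B) \<le> \<beta> * A * Ms + (\<alpha> + \<beta> * B)"
            by (simp add: mult_left_le)
        qed
        finally show "(\<integral>\<^sup>+ x. (\<integral>\<^sup>+ \<omega>. ennreal (\<bar>Zinc P \<mu>s g X i \<omega>\<bar> powr p) \<partial>Mx x) \<partial>\<mu>s)
            \<le> ennreal (\<beta> * A * Ms + (\<alpha> + \<beta> * B))" .
      qed
      then show "(SUP i\<in>{1..}. \<integral>\<^sup>+ x. (\<integral>\<^sup>+ \<omega>. ennreal (\<bar>Zinc P \<mu>s g X i \<omega>\<bar> powr p) \<partial>Mx x) \<partial>\<mu>s) < \<infinity>"
        using le_less_trans by fastforce
    qed
  qed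
qed

end
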